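(* Let $S=\{s_1<\dots<s_{k_1}\}$ and $T=\{t_1<\dots<t_{k_2}\}$ be nonempty subsets of $\{1,\dots,n-1\}$, let $d=\gcd\{s+t: s\in S,t\in T\}$ and $d'=\gcd(s_1,d)$. For a positive integer $i$ let $P_i=\{\ell\in\mathcal{I}_n : \ell\equiv is_1\pmod d\}$, where $\mathcal{I}_n=\{-n+1,\dots,n-1\}$ (integers). Then for every positive integer $i$: (a) $P_i=P_{i+d/d'}$; (b) $P_i,\dots,P_{i-1+d/d'}$ are mutually disjoint; (c) if $i\ge2$, then $P_i=\{\ell\in\mathcal{I}_n : \ell-s_1\in P_{i-1}\text{ or }\ell+t_1\in P_{i-1}\}$. *)

theory Defs
  imports Main "HOL-Number_Theory.Cong"
begin

definition I_n :: "nat \<Rightarrow> int set" where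
  "I_n n = {-int n + 1 .. int n - 1}"

definition P_set :: "nat \<Rightarrow> nat \<Rightarrow> nat \<Rightarrow> nat \<Rightarrow> int set" where
  "P_set n d s1 i = {l \<in> I_n n. [l = int i * int s1] (mod int d)}"

end

theory Submission
  imports Defs
begin

theorem lemma2p8:
  fixes n :: nat and S T :: "nat set"
  assumes "S \<noteq> {}" "T \<noteq> {}" "S \<subseteq> {1..n-1}" "T \<subseteq> {1..n-1}"
  defines "d \<equiv> Gcd {s + t | s t. s \<in> S \<and> t \<in> T}"
      and "s1 \<equiv> Min S" and "t1 \<equiv> Min T"
  defines "d' \<equiv> gcd s1 d"
  defines "P \<equiv> P_set n d s1"
  shows "\<forall>i\<ge>1.
           P i = P (i + d div d') \<and>
           (\<forall>j\<in>{i..i - 1 + d div d'}. \<forall>k\<in>{i..i - 1 + d div d'}. j \<noteq> k \<longrightarrow> P j \<inter> P k = {}) \<and>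
           (i \<ge> 2 \<longrightarrow> P i = {l \<in> I_n n. l - int s1 \<in> P (i - 1) \<or> l + int t1 \<in> P (i - 1)})"
proof -
  have fS: "finite S" using assms(3) finite_subset by blast
  have fT: "finite T" using assms(4) finite_subset by blast
  have s1S: "s1 \<in> S" unfolding s1_def using fS assms(1) by simp
  have t1T: "t1 \<in> T" unfolding t1_def using fT assms(2) by simp
  have s1b: "1 \<le> s1" "s1 \<le> n - 1" using s1S assms(3) by auto
  have t1b: "1 \<le> t1" "t1 \<le> n - 1" using t1T assms(4) by auto
  have dd: "d dvd s1 + t1" unfolding d_def by (rule Gcd_dvd) (use s1S t1T in blast)
  have dpos: "d > 0"
  proof -
    have "d \<noteq> 0" unfolding d_def Gcd_0_iff using s1S t1T s1b by fastforce
    then show ?thesis by simp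
  qed
  have d'pos: "d' > 0" unfolding d'_def using dpos by simp
  obtain m where m: "d = m * d'" unfolding d'_def by (metis gcd_dvd2 dvd_def mult.commute)
  obtain a where a: "s1 = a * d'" unfolding d'_def by (metis gcd_dvd1 dvd_def mult.commute)
  have mdiv: "d div d' = m" using m d'pos by simp
  have cop: "coprime a m"
  proof -
    have g: "gcd s1 d = gcd a m * d'" using a m by (simp add: gcd_mult_right gcd.commute)
    have h: "gcd a m * d' = 1 * d'" using g unfolding d'_def by auto
    have "gcd a m = 1" using mult_right_cancel[of d' "gcd a m" 1] h d'pos by linarith
    then show ?thesis by (simp add: coprime_iff_gcd_eq_1)
  qed
  have key: "int d dvd (int j - int k) * int s1 \<longleftrightarrow> int m dvd (int j - int k)" for j k
  proof -
    have "int d dvd (int j - int k) * int s1 \<longleftrightarrow> int m * int d' dvd ((int j - int k) * int a) * int d'"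
      using m a by (simp add: ac_simps)
    also have "\<dots> \<longleftrightarrow> int m dvd (int j - int k) * int a" using d'pos by simp
    also have "\<dots> \<longleftrightarrow> int m dvd (int j - int k)"
      using cop by (metis coprime_commute coprime_dvd_mult_left_iff coprime_int_iff)
    finally show ?thesis .
  qed
  have congeq: "[l = int j * int s1] (mod int d) \<longleftrightarrow> [l = int k * int s1] (mod int d)"
    if "int m dvd (int j - int k)" for l j k
  proof -
    have "[int j * int s1 = int k * int s1] (mod int d)"
      using key[of j k] that by (simp add: cong_iff_dvd_diff left_diff_distrib)
    then show ?thesis by (meson cong_sym cong_trans)
  qed
  show ?thesis
  proof (intro allI impI conjI)
    fix i :: nat assume i: "i \<ge> 1"
    show "P i = P (i + d div d')"
      unfolding P_def P_set_def mdiv using congeq[of "i + m" i] by auto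
    show "\<forall>j\<in>{i..i - 1 + d div d'}. \<forall>k\<in>{i..i - 1 + d div d'}. j \<noteq> k \<longrightarrow> P j \<inter> P k = {}"
    proof (intro ballI impI)
      fix j k assume j: "j \<in> {i..i - 1 + d div d'}" and k: "k \<in> {i..i - 1 + d div d'}" and jk: "j \<noteq> k"
      show "P j \<inter> P k = {}"
      proof (rule ccontr)
        assume "P j \<inter> P k \<noteq> {}"
        then obtain l where "[l = int j * int s1] (mod int d)" "[l = int k * int s1] (mod int d)"
          unfolding P_def P_set_def by auto
        then have "[int j * int s1 = int k * int s1] (mod int d)" by (meson cong_sym cong_trans)
        then have "int m dvd (int j - int k)"
          using key[of j k] by (simp add: cong_iff_dvd_diff left_diff_distrib)
        moreover have "\<bar>int j - int k\<bar> < int m" using j k jk i mdiv by auto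
        moreover have "int j - int k \<noteq> 0" using jk by simp
        ultimately have "\<bar>int m\<bar> \<le> \<bar>int j - int k\<bar>" "\<bar>int j - int k\<bar> < int m"
          using dvd_imp_le_int[of "int j - int k" "int m"] by auto
        then show False by linarith
      qed
    qed
    assume i2: "i \<ge> 2"
    have ct: "[int t1 = - int s1] (mod int d)"
    proof -
      have "int d dvd int s1 + int t1" using dd by (metis of_nat_add of_nat_dvd_iff)
      then show ?thesis by (simp add: cong_iff_dvd_diff add.commute)
    qed
    have c1: "[l - int s1 = int (i - 1) * int s1] (mod int d) \<longleftrightarrow> [l = int i * int s1] (mod int d)" for l
    proof -
      have "int (i - 1) * int s1 = int i * int s1 - int s1" using i2 by (simp add: of_nat_diff left_diff_distrib)
      then show ?thesis by (simp add: cong_iff_dvd_diff algebra_simps)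
    qed
    have c2: "[l + int t1 = int (i - 1) * int s1] (mod int d) \<longleftrightarrow> [l = int i * int s1] (mod int d)" for l
    proof -
      have "int (i - 1) * int s1 = int i * int s1 - int s1" using i2 by (simp add: of_nat_diff left_diff_distrib)
      moreover have "[l + int t1 = l - int s1] (mod int d)" using cong_add[OF cong_refl[of l] ct] by simp
      ultimately show ?thesis using c1 by (metis cong_sym cong_trans)
    qed
    show "P i = {l \<in> I_n n. l - int s1 \<in> P (i - 1) \<or> l + int t1 \<in> P (i - 1)}"
    proof (rule set_eqI, rule iffI)
      fix l assume "l \<in> P i"
      then have l: "l \<in> I_n n" "[l = int i * int s1] (mod int d)" unfolding P_def P_set_def by auto
      show "l \<in> {l \<in> I_n n. l - int s1 \<in> P (i - 1) \<or> l + int t1 \<in> P (i - 1)}"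
      proof (cases "l - int s1 \<ge> - int n + 1")
        case True
        then have "l - int s1 \<in> I_n n" using l s1b unfolding I_n_def by auto
        then show ?thesis using l c1 unfolding P_def P_set_def by auto
      next
        case False
        then have "l + int t1 \<in> I_n n" using l s1b t1b unfolding I_n_def by auto
        then show ?thesis using l c2 unfolding P_def P_set_def by auto
      qed
    next
      fix l assume "l \<in> {l \<in> I_n n. l - int s1 \<in> P (i - 1) \<or> l + int t1 \<in> P (i - 1)}"
      then show "l \<in> P i" using c1 c2 unfolding P_def P_set_def by auto
    qed
  qed
qed

end
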